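(* Let $p_1\equiv p_2\equiv1\pmod4$ be primes and let $\varepsilon_{p_1p_2}=a+b\sqrt{p_1p_2}$ be the fundamental unit of $\mathbb{Q}(\sqrt{p_1p_2})$. If $N(\varepsilon_{p_1p_2})=1$, then neither $a+1$ nor $a-1$ is a perfect square in $\mathbb{N}$.
   Context: $a,b$ are integers or half-integers; $N$ denotes the norm from $\mathbb{Q}(\sqrt{p_1p_2})$ to $\mathbb{Q}$. *)

theory Defs
  imports Complex_Main "HOL-Computational_Algebra.Primes"
begin

text \<open>Elements of the real quadratic field Q(sqrt d) are written a + b sqrt d with
  a, b rational.  Norm N(a + b sqrt d) = a^2 - d b^2.\<close>

definition qnorm :: "int \<Rightarrow> rat \<Rightarrow> rat \<Rightarrow> rat" where
  "qnorm d a b = a^2 - of_int d * b^2"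

text \<open>a + b sqrt d is an algebraic integer iff its trace 2a and norm are integers.\<close>
definition qint :: "int \<Rightarrow> rat \<Rightarrow> rat \<Rightarrow> bool" where
  "qint d a b \<longleftrightarrow> 2 * a \<in> \<int> \<and> qnorm d a b \<in> \<int>"

definition qunit :: "int \<Rightarrow> rat \<Rightarrow> rat \<Rightarrow> bool" where
  "qunit d a b \<longleftrightarrow> qint d a b \<and> (qnorm d a b = 1 \<or> qnorm d a b = -1)"

definition qval :: "int \<Rightarrow> rat \<Rightarrow> rat \<Rightarrow> real" where
  "qval d a b = of_rat a + of_rat b * sqrt (of_int d)"

definition fundamental_unit :: "int \<Rightarrow> rat \<Rightarrow> rat \<Rightarrow> bool" where
  "fundamental_unit d a b \<longleftrightarrow> qunit d a b \<and> qval d a b > 1 \<and>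
     (\<forall>u v. qunit d u v \<and> qval d u v > 1 \<longrightarrow> qval d a b \<le> qval d u v)"

end

theory Submission
  imports Defs
begin

lemma descent:
  fixes A B x y :: int
  shows "odd A \<Longrightarrow> odd B \<Longrightarrow> x \<noteq> 0 \<Longrightarrow> 2*A*y^2 \<noteq> x^2*B"
proof (induction "nat \<bar>x\<bar>" arbitrary: x y rule: less_induct)
  case less
  show ?case
  proof
    assume h: "2*A*y^2 = x^2*B"
    have "even (x^2*B)" using h by (metis dvd_triv_left mult.assoc)
    hence "even x" using less by auto
    then obtain x' where x: "x = 2*x'" by blast
    from h have h2: "A*y^2 = 2*(x'^2*B)" by (simp add: x power_mult_distrib)
    hence "even (A*y^2)" by simp
    hence "even y" using less by auto
    then obtain y' where y: "y = 2*y'" by blast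
    from h2 have h3: "2*A*y'^2 = x'^2*B" by (simp add: y power_mult_distrib algebra_simps)
    have "x' \<noteq> 0" using less x by auto
    moreover have "nat \<bar>x'\<bar> < nat \<bar>x\<bar>" using x \<open>x' \<noteq> 0\<close> by auto
    ultimately show False using less h3 by blast
  qed
qed

lemma sqmod4:
  fixes z :: int shows "z^2 mod 4 = 0 \<or> z^2 mod 4 = 1"
proof (cases "even z")
  case True
  then obtain u where "z = 2*u" by blast
  hence "z^2 = 4*(u^2)" by (simp add: power_mult_distrib)
  thus ?thesis by simp
next
  case False
  then obtain u where "z = 2*u+1" using oddE by blast
  hence z: "z^2 = 4*(u^2+u)+1" by (simp add: power2_eq_square algebra_simps)
  have "\<And>w::int. (4*w+1) mod 4 = 1" by presburger
  from this[of "u^2+u"] z show ?thesis by simp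
qed

lemma core:
  fixes d m r s n c :: int
  assumes d4: "d mod 4 = 1" and eq: "d * r^2 = m * s^2" and cop: "coprime r s"
    and s0: "s \<noteq> 0" and m: "m = n^2 * (n^2 + c)" and c: "c = 2 \<or> c = -2" and n0: "n \<noteq> 0"
  shows False
proof (cases "even n")
  case True
  then obtain t where n: "n = 2*t" by blast
  define k where "k = 2*t^2 + c div 2"
  have k: "n^2 + c = 2*k" using c by (auto simp: k_def n power_mult_distrib)
  have kodd: "odd k" using c by (auto simp: k_def)
  have dodd: "odd d" using d4 by presburger
  have r0: "r \<noteq> 0"
  proof
    assume "r = 0"
    hence "m * s^2 = 0" using eq by simp
    moreover have "m \<noteq> 0" using m k kodd n0 by auto
    ultimately show False using s0 by simp
  qed
  have "m * s^2 = n^2*(2*k)*s^2" unfolding m k[symmetric] ..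
  also have "\<dots> = 2*k*(n*s)^2" by (simp add: power_mult_distrib algebra_simps)
  finally have "2*k*(n*s)^2 = r^2*d" using eq by (metis mult.commute)
  thus False using descent[OF kodd dodd r0] by blast
next
  case False
  have dodd: "odd d" using d4 by presburger
  obtain u where "n = 2*u+1" using False oddE by blast
  hence n2: "n^2 = 4*(u^2+u)+1" by (simp add: power2_eq_square algebra_simps)
  have w1: "\<And>w::int. (4*w+1) mod 4 = 1" by presburger
  have n2m: "n^2 mod 4 = 1" unfolding n2 by (rule w1)
  have w3: "\<And>w::int. (4*w+3) mod 4 = 3" by presburger
  have nc: "(n^2 + c) mod 4 = 3"
    using c
  proof
    assume "c = 2"
    hence "n^2 + c = 4*(u^2+u)+3" using n2 by simp
    thus ?thesis by (simp only: w3)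
  next
    assume "c = -2"
    hence "n^2 + c = 4*(u^2+u) - 1" using n2 by linarith
    moreover have "\<And>w::int. (4*w - 1) mod 4 = 3" by presburger
    ultimately show ?thesis by (simp only:)
  qed
  have "m mod 4 = ((n^2 mod 4)*((n^2+c) mod 4)) mod 4" unfolding m by (rule mod_mult_eq[symmetric])
  hence m3: "m mod 4 = 3" using n2m nc by simp
  have sodd: "odd s"
  proof
    assume "even s"
    hence "even (d * r^2)" using eq by simp
    hence "even r" using dodd by auto
    thus False using \<open>even s\<close> cop by fastforce
  qed
  obtain v where "s = 2*v+1" using sodd oddE by blast
  hence s2: "s^2 = 4*(v^2+v)+1" by (simp add: power2_eq_square algebra_simps)
  have s2m: "s^2 mod 4 = 1" unfolding s2 by (rule w1)
  have "(m * s^2) mod 4 = ((m mod 4) * (s^2 mod 4)) mod 4" by (rule mod_mult_eq[symmetric])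
  hence A: "(m * s^2) mod 4 = 3" using m3 s2m by simp
  have B: "(d * r^2) mod 4 = ((d mod 4) * (r^2 mod 4)) mod 4" by (rule mod_mult_eq[symmetric])
  have "(d * r^2) mod 4 = r^2 mod 4" using B d4 by simp
  hence "(d * r^2) mod 4 = 0 \<or> (d * r^2) mod 4 = 1"
    using sqmod4[of r] by simp
  thus False using eq A by simp
qed

lemma aux:
  fixes d N :: int and a b e :: rat
  assumes d4: "d mod 4 = 1" and dpos: "d > 0" and nm: "a^2 - of_int d * b^2 = 1"
    and a: "a = of_int N^2 + e" and e: "e = 1 \<or> e = -1" and q: "qval d a b > 1"
  shows False
proof (cases "N = 0")
  case True
  hence "of_int d * b^2 = 0" using nm a e by auto
  hence "b = 0" using dpos by simp
  hence "qval d a b = of_rat e" using a True by (simp add: qval_def)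
  thus False using q e by auto
next
  case False
  define c :: int where "c = (if e = 1 then 2 else -2)"
  have ce: "of_int c = 2*e" using e by (auto simp: c_def)
  have c: "c = 2 \<or> c = -2" by (auto simp: c_def)
  obtain r s where rs: "quotient_of b = (r, s)" by (cases "quotient_of b")
  have b: "b = of_int r / of_int s" using quotient_of_div[OF rs] .
  have s0: "s > 0" using quotient_of_denom_pos[OF rs] .
  have cop: "coprime r s" using quotient_of_coprime[OF rs] .
  have e2: "e*e = 1" using e by auto
  have "of_int d * b^2 = a^2 - 1" using nm by simp
  also have "\<dots> = of_int N^2 * (of_int N^2 + 2*e) + (e*e - 1)" unfolding a by (simp add: power2_eq_square algebra_simps)
  also have "\<dots> = of_int (N^2 * (N^2 + c))" using e2 ce by simp
  finally have M: "of_int d * b^2 = of_int (N^2 * (N^2 + c))" .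
  have sne: "(of_int s :: rat) \<noteq> 0" using s0 by simp
  have "b^2 = of_int r^2 / of_int s^2" unfolding b by (simp add: power_divide)
  hence "of_int d * (of_int r^2 / of_int s^2) = (of_int (N^2 * (N^2 + c)) :: rat)" using M by simp
  hence "of_int d * of_int r^2 = of_int (N^2 * (N^2 + c)) * (of_int s^2 :: rat)"
    using sne by (simp add: field_simps)
  hence "of_int (d * r^2) = (of_int (N^2 * (N^2 + c) * s^2) :: rat)" by simp
  hence "d * r^2 = N^2 * (N^2 + c) * s^2" using of_int_eq_iff by blast
  thus False using core[OF d4 _ cop _ refl c False] s0 by auto
qed

theorem lemma14:
  fixes p1 p2 :: nat and a b :: rat
  assumes "prime p1" "prime p2" "p1 mod 4 = 1" "p2 mod 4 = 1"
    and "fundamental_unit (int (p1 * p2)) a b"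
    and "qnorm (int (p1 * p2)) a b = 1"
  shows "\<not> (\<exists>n::nat. a + 1 = of_nat (n^2)) \<and> \<not> (\<exists>n::nat. a - 1 = of_nat (n^2))"
proof -
  let ?d = "int (p1 * p2)"
  have "(p1*p2) mod 4 = ((p1 mod 4)*(p2 mod 4)) mod 4" by (rule mod_mult_eq[symmetric])
  hence n4: "(p1*p2) mod 4 = 1" using assms(3,4) by simp
  have "?d mod 4 = int ((p1*p2) mod 4)" by (simp add: zmod_int)
  hence d4: "?d mod 4 = 1" using n4 by simp
  have dpos: "?d > 0" using assms(1,2) by (simp add: prime_gt_0_nat)
  have nm: "a^2 - of_int ?d * b^2 = 1" using assms(6) by (simp add: qnorm_def)
  have q: "qval ?d a b > 1" using assms(5) by (simp add: fundamental_unit_def)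
  show ?thesis
  proof safe
    fix n :: nat assume h: "a + 1 = of_nat (n^2)"
    have "a = of_int (int n)^2 + (-1)" using h by (simp add: algebra_simps)
    thus False using aux[OF d4 dpos nm _ _ q] by blast
  next
    fix n :: nat assume h: "a - 1 = of_nat (n^2)"
    have "a = of_int (int n)^2 + 1" using h by (simp add: algebra_simps)
    thus False using aux[OF d4 dpos nm _ _ q] by blast
  qed
qed

end
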